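(* Let $E$ be a compact subset of $\mathbb{R}^2$. Then $E$ is purely unrectifiable if and only if $\lim_{\varepsilon \to 0} R_E(\varepsilon,r,M) = 0$ for all $r > 0$ and all $M > 0$.
   Context: A Lipschitz graph in $\mathbb{R}^2$ is a set $\Gamma = \{ x\omega_1 + F(x)\omega_2 : x \in \mathbb{R}\}$ where $\omega_1,\omega_2 \in S^1$ are orthonormal and $F:\mathbb{R}\to\mathbb{R}$ is Lipschitz. A set $E \subset \mathbb{R}^2$ is purely unrectifiable if for all orthonormal $\omega_1,\omega_2 \in S^1$ and all Lipschitz $F:\mathbb{R}\to\mathbb{R}$ one has $m(\{x \in \mathbb{R} : x\omega_1 + F(x)\omega_2 \in E\}) = 0$, where $m$ is Lebesgue measure on $\mathbb{R}$ (equivalently, $E\cap\Gamma$ has zero one-dimensional spherical (or Hausdorff) measure for every Lipschitz graph $\Gamma$). For $\varepsilon, r, M > 0$ the rectifiability constant is $$R_E(\varepsilon,r,M) = \sup \frac{m(\{x \in J : x\omega_1 + (F(x)+y)\omega_2 \in E \text{ for some } -\varepsilon \le y \le \varepsilon\})}{m(J)},$$ the supremum over all orthonormal $\omega_1,\omega_2 \in S^1$, all $F:\mathbb{R}\to\mathbb{R}$ with Lipschitz constant $\sup_{x\ne y}|F(x)-F(y)|/|x-y| \le M$, and all intervals $J \subset \mathbb{R}$ of length at least $r$. *)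

theory Defs
  imports "HOL-Analysis.Analysis"
begin

definition orthonormal2 :: "real^2 \<Rightarrow> real^2 \<Rightarrow> bool" where
  "orthonormal2 w1 w2 \<longleftrightarrow> norm w1 = 1 \<and> norm w2 = 1 \<and> inner w1 w2 = 0"

definition purely_unrectifiable :: "(real^2) set \<Rightarrow> bool" where
  "purely_unrectifiable E \<longleftrightarrow>
     (\<forall>w1 w2 (F::real \<Rightarrow> real) L. orthonormal2 w1 w2 \<and> L-lipschitz_on UNIV F \<longrightarrow>
        {x. x *\<^sub>R w1 + F x *\<^sub>R w2 \<in> E} \<in> null_sets lebesgue)"

definition rect_const :: "(real^2) set \<Rightarrow> real \<Rightarrow> real \<Rightarrow> real \<Rightarrow> real" where
  "rect_const E \<epsilon> r M =
     Sup {measure lebesgue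
            {x \<in> {a..b}. \<exists>y. -\<epsilon> \<le> y \<and> y \<le> \<epsilon> \<and> x *\<^sub>R w1 + (F x + y) *\<^sub>R w2 \<in> E}
          / (b - a)
         | w1 w2 F a b. orthonormal2 w1 w2 \<and> M-lipschitz_on UNIV F \<and> b - a \<ge> r}"

end

theory Submission
  imports Defs "HOL-Complex_Analysis.Great_Picard"
begin

definition Aset :: "(real^2) set \<Rightarrow> real \<Rightarrow> real^2 \<Rightarrow> real^2 \<Rightarrow> (real\<Rightarrow>real) \<Rightarrow> real \<Rightarrow> real \<Rightarrow> real set" where
  "Aset E e w1 w2 F a b = {x \<in> {a..b}. \<exists>y. -e \<le> y \<and> y \<le> e \<and> x *\<^sub>R w1 + (F x + y) *\<^sub>R w2 \<in> E}"

definition RSet :: "(real^2) set \<Rightarrow> real \<Rightarrow> real \<Rightarrow> real \<Rightarrow> real set" where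
  "RSet E e r M = {measure lebesgue (Aset E e w1 w2 F a b) / (b - a)
         | w1 w2 F a b. orthonormal2 w1 w2 \<and> M-lipschitz_on UNIV F \<and> b - a \<ge> r}"

lemma rect_const_eq: "rect_const E e r M = Sup (RSet E e r M)"
  unfolding rect_const_def RSet_def Aset_def by simp

lemma frame_norm:
  assumes "orthonormal2 w1 w2"
  shows "norm (x *\<^sub>R w1 + z *\<^sub>R w2) ^ 2 = x^2 + z^2"
proof -
  have "inner w1 w1 = 1" "inner w2 w2 = 1" "inner w1 w2 = 0" "inner w2 w1 = 0"
    using assms unfolding orthonormal2_def by (auto simp: inner_commute dot_square_norm)
  have "norm (x *\<^sub>R w1 + z *\<^sub>R w2) ^ 2 = inner (x *\<^sub>R w1 + z *\<^sub>R w2) (x *\<^sub>R w1 + z *\<^sub>R w2)"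
    by (simp add: power2_norm_eq_inner)
  also have "\<dots> = x^2 + z^2" using \<open>inner w1 w1 = 1\<close> \<open>inner w2 w2 = 1\<close> \<open>inner w1 w2 = 0\<close> \<open>inner w2 w1 = 0\<close>
    by (simp add: inner_add_left inner_add_right algebra_simps power2_eq_square)
  finally show ?thesis .
qed

lemma frame_bound:
  assumes "orthonormal2 w1 w2" "norm (x *\<^sub>R w1 + z *\<^sub>R w2) \<le> B"
  shows "\<bar>x\<bar> \<le> B" "\<bar>z\<bar> \<le> B"
proof -
  have B: "0 \<le> B" using assms(2) norm_ge_zero order_trans by blast
  have "x^2 + z^2 \<le> B^2" using frame_norm[OF assms(1)] assms(2)
    by (metis norm_ge_zero power_mono)
  then have "x^2 \<le> B^2" "z^2 \<le> B^2" by (auto intro: order_trans[rotated])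
  then show "\<bar>x\<bar> \<le> B" "\<bar>z\<bar> \<le> B" using B by (metis abs_le_square_iff abs_of_nonneg)+
qed

lemma elem_le1:
  assumes "b - a > 0"
  shows "measure lebesgue (Aset E e w1 w2 F a b) / (b - a) \<le> 1"
proof (cases "Aset E e w1 w2 F a b \<in> sets lebesgue")
  case True
  have "measure lebesgue (Aset E e w1 w2 F a b) \<le> measure lebesgue {a..b}"
    by (rule measure_mono_fmeasurable[OF _ True]) (auto simp: Aset_def)
  then show ?thesis using assms by simp
next
  case False then show ?thesis using assms by (simp add: measure_notin_sets)
qed

lemma ortho_ex: "orthonormal2 (axis 1 1) (axis 2 1)"
  unfolding orthonormal2_def by (simp add: inner_axis_axis)

lemma RSet_bdd: "r > 0 \<Longrightarrow> bdd_above (RSet E e r M)"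
  unfolding RSet_def bdd_above_def using elem_le1 by (smt (verit) mem_Collect_eq)

lemma RSet_ne: "M \<ge> 0 \<Longrightarrow> RSet E e r M \<noteq> {}"
proof -
  assume M: "M \<ge> 0"
  have "(M-lipschitz_on UNIV (\<lambda>x. 0::real))" using M by (auto simp: lipschitz_on_def)
  then have "measure lebesgue (Aset E e (axis 1 1) (axis 2 1) (\<lambda>x. 0) 0 r) / (r - 0) \<in> RSet E e r M"
    unfolding RSet_def using ortho_ex by fastforce
  then show ?thesis by blast
qed

lemma RSet_nonneg: "r > 0 \<Longrightarrow> z \<in> RSet E e r M \<Longrightarrow> z \<ge> 0"
  unfolding RSet_def by auto

lemma rect_nonneg: "r > 0 \<Longrightarrow> M \<ge> 0 \<Longrightarrow> rect_const E e r M \<ge> 0"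
  unfolding rect_const_eq
  by (meson RSet_bdd RSet_ne RSet_nonneg cSup_upper ex_in_conv order_trans)

lemma Aset_compact:
  assumes F: "continuous_on UNIV F" and E: "closed E"
  shows "compact (Aset E e w1 w2 F a b)"
proof -
  let ?f = "\<lambda>p::real\<times>real. fst p *\<^sub>R w1 + (F (fst p) + snd p) *\<^sub>R w2"
  have c: "continuous_on UNIV ?f"
    by (intro continuous_intros continuous_on_compose2[OF F]) auto
  have cl: "closed (?f -` E)"
    by (rule closed_vimage[OF E c])
  have "compact (({a..b} \<times> {-e..e}) \<inter> ?f -` E)"
    by (intro compact_Int_closed compact_Times cl) auto
  then have "compact (fst ` (({a..b} \<times> {-e..e}) \<inter> ?f -` E))"
    by (intro compact_continuous_image continuous_intros)
  moreover have "fst ` (({a..b} \<times> {-e..e}) \<inter> ?f -` E) = Aset E e w1 w2 F a b"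
    unfolding Aset_def by (force simp: image_iff)
  ultimately show ?thesis by simp
qed

lemma easy_dir:
  assumes "compact E" "\<not> purely_unrectifiable E"
  shows "\<exists>r>0. \<exists>M>0. \<not> ((\<lambda>\<epsilon>. rect_const E \<epsilon> r M) \<longlongrightarrow> 0) (at_right 0)"
proof -
  obtain w1 w2 F L where fr: "orthonormal2 w1 w2" and L: "L-lipschitz_on UNIV F"
    and nn: "{x. x *\<^sub>R w1 + F x *\<^sub>R w2 \<in> E} \<notin> null_sets lebesgue"
    using assms(2) unfolding purely_unrectifiable_def by blast
  obtain B where B: "B > 0" "\<And>p. p \<in> E \<Longrightarrow> norm p \<le> B"
    using compact_imp_bounded[OF assms(1)] bounded_pos by blast
  define S where "S = {x. x *\<^sub>R w1 + F x *\<^sub>R w2 \<in> E}"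
  have Fc: "continuous_on UNIV F" using L lipschitz_on_continuous_on by blast
  have "closed S" unfolding S_def
    by (rule closed_vimage[of E "\<lambda>x. x *\<^sub>R w1 + F x *\<^sub>R w2", simplified vimage_def])
       (auto intro!: continuous_intros continuous_on_compose2[OF Fc] compact_imp_closed assms(1))
  then have Sm: "S \<in> sets lebesgue" by auto
  have Ssub: "S \<subseteq> {-B..B}"
  proof
    fix x assume "x \<in> S"
    then have "norm (x *\<^sub>R w1 + F x *\<^sub>R w2) \<le> B" by (simp add: S_def B(2))
    then have "\<bar>x\<bar> \<le> B" by (rule frame_bound(1)[OF fr])
    then show "x \<in> {-B..B}" by (simp add: abs_le_iff)
  qed
  have Sf: "S \<in> fmeasurable lebesgue"
    by (rule fmeasurableI2[OF _ Ssub Sm]) simp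
  have mpos: "measure lebesgue S > 0"
  proof (rule ccontr)
    assume "\<not> measure lebesgue S > 0"
    then have "measure lebesgue S = 0" using measure_nonneg[of lebesgue S] by linarith
    then have "S \<in> null_sets lebesgue" using Sf by (intro null_setsI) (auto simp: emeasure_eq_measure2)
    then show False using nn S_def by simp
  qed
  define M where "M = L + 1"
  have L0: "L \<ge> 0" using L lipschitz_on_nonneg by blast
  have LM: "M-lipschitz_on UNIV F" unfolding M_def by (rule lipschitz_on_le[OF L]) simp
  define c where "c = measure lebesgue S / (2*B)"
  have c0: "c > 0" unfolding c_def using mpos B by simp
  have low: "rect_const E e (2*B) M \<ge> c" if e: "e \<ge> 0" for e
  proof -
    let ?A = "Aset E e w1 w2 F (-B) B"
    have Am: "?A \<in> fmeasurable lebesgue"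
      using Aset_compact[OF Fc compact_imp_closed[OF assms(1)]]
      by (simp add: lmeasurable_compact)
    have "S \<subseteq> ?A"
    proof
      fix x assume x: "x \<in> S"
      then have "x \<in> {-B..B}" using Ssub by blast
      then show "x \<in> ?A" unfolding Aset_def using x e unfolding S_def
        by (intro CollectI conjI exI[of _ 0]) auto
    qed
    then have "measure lebesgue S \<le> measure lebesgue ?A"
      by (intro measure_mono_fmeasurable[OF _ Sm Am])
    then have "c \<le> measure lebesgue ?A / (B - (-B))" unfolding c_def using B
      by (simp add: divide_right_mono)
    also have "\<dots> \<le> rect_const E e (2*B) M" unfolding rect_const_eq
      apply (rule cSup_upper[OF _ RSet_bdd])
      subgoal unfolding RSet_def mem_Collect_eq
        apply (rule exI[of _ w1], rule exI[of _ w2], rule exI[of _ F], rule exI[of _ "-B"], rule exI[of _ B])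
        using fr LM by simp
      using B by simp
    finally show ?thesis .
  qed
  have "\<not> ((\<lambda>\<epsilon>. rect_const E \<epsilon> (2*B) M) \<longlongrightarrow> 0) (at_right 0)"
  proof
    assume "((\<lambda>\<epsilon>. rect_const E \<epsilon> (2*B) M) \<longlongrightarrow> 0) (at_right 0)"
    then have "eventually (\<lambda>\<epsilon>. rect_const E \<epsilon> (2*B) M < c) (at_right 0)"
      using c0 by (simp add: order_tendstoD(2))
    moreover have "eventually (\<lambda>\<epsilon>. \<epsilon> > (0::real)) (at_right 0)"
      by (simp add: eventually_at_right_less)
    ultimately have "eventually (\<lambda>\<epsilon>::real. False) (at_right 0)"
      by eventually_elim (use low in \<open>fastforce dest: less_imp_le\<close>)
    then show False by simp
  qed
  then show ?thesis using B L0 unfolding M_def by (intro exI[of _ "2*B"] conjI exI[of _ "L+1"]) auto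
qed

lemma norm4: "norm ((a::'a::real_normed_vector) + b + c + d) \<le> norm a + norm b + norm c + norm d"
  by (meson add_mono norm_triangle_ineq order_refl order_trans)

lemma hard_dir:
  assumes cE: "compact E" and PU: "purely_unrectifiable E" and r: "r > 0" and M: "M > 0"
  shows "((\<lambda>\<epsilon>. rect_const E \<epsilon> r M) \<longlongrightarrow> 0) (at_right 0)"
proof (rule order_tendstoI)
  fix a :: real assume a: "a < 0"
  have "\<forall>\<epsilon>. a < rect_const E \<epsilon> r M"
    using rect_nonneg[OF r] M a by (meson less_eq_real_def less_le_trans)
  then show "eventually (\<lambda>\<epsilon>. a < rect_const E \<epsilon> r M) (at_right 0)"
    by (rule always_eventually)
next
  fix \<delta> :: real assume \<delta>: "\<delta> > 0"
  show "eventually (\<lambda>\<epsilon>. rect_const E \<epsilon> r M < \<delta>) (at_right 0)"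
  proof (rule ccontr)
    assume ne: "\<not> eventually (\<lambda>\<epsilon>. rect_const E \<epsilon> r M < \<delta>) (at_right 0)"
    have "\<exists>\<epsilon>. 0 < \<epsilon> \<and> \<epsilon> < 1 / Suc n \<and> rect_const E \<epsilon> r M \<ge> \<delta>" for n :: nat
    proof -
      have pos: "(1::real) / Suc n > 0" by simp
      show ?thesis
      proof (rule ccontr)
        assume "\<not> ?thesis"
        then have "\<forall>y>0. y < 1/Suc n \<longrightarrow> rect_const E y r M < \<delta>" by (auto simp: not_le)
        then have "eventually (\<lambda>\<epsilon>. rect_const E \<epsilon> r M < \<delta>) (at_right 0)"
          unfolding eventually_at_right_field using pos by blast
        with ne show False by simp
      qed
    qed
    then obtain eps where eps: "\<And>n. 0 < eps n" "\<And>n. eps n < 1 / Suc n"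
      "\<And>n. rect_const E (eps n) r M \<ge> \<delta>" by metis
    have "\<exists>w1 w2 F a b. orthonormal2 w1 w2 \<and> M-lipschitz_on UNIV F \<and> b - a \<ge> r \<and>
        measure lebesgue (Aset E (eps n) w1 w2 F a b) / (b - a) > \<delta>/2" for n
    proof -
      have "\<delta>/2 < Sup (RSet E (eps n) r M)" using eps(3)[of n] \<delta> rect_const_eq by simp
      then have "\<exists>z\<in>RSet E (eps n) r M. \<delta>/2 < z"
        using less_cSup_iff[OF RSet_ne[OF less_imp_le[OF M]] RSet_bdd[OF r]] by simp
      then obtain z where "z \<in> RSet E (eps n) r M" "\<delta>/2 < z" by blast
      then show ?thesis unfolding RSet_def by blast
    qed
    then obtain W1 W2 FF AA BB where fr: "\<And>n. orthonormal2 (W1 n) (W2 n)"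
      and lip: "\<And>n. M-lipschitz_on UNIV (FF n)" and len: "\<And>n. BB n - AA n \<ge> r"
      and rat: "\<And>n. measure lebesgue (Aset E (eps n) (W1 n) (W2 n) (FF n) (AA n) (BB n)) / (BB n - AA n) > \<delta>/2"
      by metis
    define A where "A n = Aset E (eps n) (W1 n) (W2 n) (FF n) (AA n) (BB n)" for n
    obtain B where B: "B > 0" "\<And>p. p \<in> E \<Longrightarrow> norm p \<le> B"
      using compact_imp_bounded[OF cE] bounded_pos by blast
    have Amem: "AA n \<le> x \<and> x \<le> BB n \<and> \<bar>x\<bar> \<le> B \<and> (\<exists>y. \<bar>y\<bar> \<le> eps n \<and> \<bar>FF n x + y\<bar> \<le> B
       \<and> x *\<^sub>R W1 n + (FF n x + y) *\<^sub>R W2 n \<in> E)" if "x \<in> A n" for n x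
    proof -
      from that obtain y where y: "AA n \<le> x" "x \<le> BB n" "-eps n \<le> y" "y \<le> eps n"
        "x *\<^sub>R W1 n + (FF n x + y) *\<^sub>R W2 n \<in> E" unfolding A_def Aset_def by auto
      then have nb: "norm (x *\<^sub>R W1 n + (FF n x + y) *\<^sub>R W2 n) \<le> B" using B(2) by blast
      show ?thesis using y frame_bound[OF fr nb] by (intro conjI exI[of _ y]) auto
    qed
    have Asub: "A n \<subseteq> {-B..B}" for n using Amem by (force simp: abs_le_iff)
    have mA: "measure lebesgue (A n) > \<delta>/2 * (BB n - AA n)" for n
      using rat[of n] len[of n] r unfolding A_def by (simp add: pos_less_divide_eq mult.commute)
    have mA2: "measure lebesgue (A n) \<ge> \<delta>/2 * r" for n
    proof -
      have "\<delta>/2 * r \<le> \<delta>/2 * (BB n - AA n)" by (rule mult_left_mono) (use len \<delta> in auto)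
      then show ?thesis using mA[of n] by linarith
    qed
    have pos: "\<delta>/2 * r > 0" using \<delta> r by simp
    have Am: "A n \<in> sets lebesgue" for n
    proof (rule ccontr)
      assume "A n \<notin> sets lebesgue"
      then have "measure lebesgue (A n) = 0" by (rule measure_notin_sets)
      with mA2[of n] pos show False by linarith
    qed
    have Af: "A n \<in> fmeasurable lebesgue" for n
      by (rule fmeasurableI2[OF _ Asub Am]) simp
    have m2B: "measure lebesgue (A n) \<le> 2 * B" for n
    proof -
      have "measure lebesgue (A n) \<le> measure lebesgue {-B..B}"
        by (rule measure_mono_fmeasurable[OF Asub Am]) simp
      then show ?thesis using B by simp
    qed
    define D where "D = 4 * B / \<delta>"
    have lenD: "BB n - AA n < D" for n
    proof -
      have "\<delta>/2 * (BB n - AA n) < 2 * B" using mA[of n] m2B[of n] by linarith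
      then show ?thesis unfolding D_def using \<delta> by (simp add: pos_less_divide_eq mult.commute)
    qed
    define K where "K = B + D"
    have D0: "D > 0" unfolding D_def using B \<delta> by simp
    have K0: "K > 0" unfolding K_def using B D0 by simp
    define C where "C = B + 1 + 2 * M * K"
    have bnds: "-K \<le> AA n \<and> BB n \<le> K \<and> (\<forall>x\<in>{-K..K}. \<bar>FF n x\<bar> \<le> C)" for n
    proof -
      have "A n \<noteq> {}"
      proof
        assume "A n = {}"
        then have "measure lebesgue (A n) = 0" by simp
        with mA2[of n] pos show False by linarith
      qed
      then obtain x0 where x0: "x0 \<in> A n" by blast
      from Amem[OF x0] obtain y where y: "AA n \<le> x0" "x0 \<le> BB n" "\<bar>x0\<bar> \<le> B" "\<bar>y\<bar> \<le> eps n"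
        "\<bar>FF n x0 + y\<bar> \<le> B" by blast
      have "1 / real (Suc n) \<le> 1" by simp
      then have "eps n \<le> 1" using eps(2)[of n] by linarith
      then have f0: "\<bar>FF n x0\<bar> \<le> B + 1" using y by linarith
      have "\<bar>FF n x\<bar> \<le> C" if x: "x \<in> {-K..K}" for x
      proof -
        have "\<bar>FF n x - FF n x0\<bar> \<le> M * \<bar>x - x0\<bar>"
          using lipschitz_onD[OF lip[of n], of x x0] by (simp add: dist_real_def)
        also have "\<dots> \<le> M * (2 * K)" using x y(3) M unfolding K_def using D0
          by (intro mult_left_mono) auto
        finally show ?thesis using f0 unfolding C_def by linarith
      qed
      then show ?thesis using y lenD[of n] unfolding K_def by auto
    qed
    define T where "T n = (W1 n, W2 n, AA n, BB n)" for n
    define S0 :: "((real^2) \<times> (real^2) \<times> real \<times> real) set"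
      where "S0 = sphere 0 1 \<times> sphere 0 1 \<times> {-K..K} \<times> {-K..K}"
    have cS0: "compact S0" unfolding S0_def by (intro compact_Times compact_sphere compact_Icc)
    have TS: "\<forall>n. T n \<in> S0" using bnds fr len r unfolding S0_def T_def orthonormal2_def by (smt (verit) atLeastAtMost_iff mem_Sigma_iff mem_sphere_0)
    obtain l k1 where l: "l \<in> S0" and k1: "strict_mono k1" and lim1: "(T \<circ> k1) \<longlonglongrightarrow> l"
      using seq_compactE[OF compact_imp_seq_compact[OF cS0] TS] by blast
    obtain w1 w2 a b where lw: "l = (w1, w2, a, b)" by (cases l) auto
    have lW1: "(\<lambda>n. W1 (k1 n)) \<longlonglongrightarrow> w1" using tendsto_fst[OF lim1] by (simp add: lw T_def o_def)
    have lW2: "(\<lambda>n. W2 (k1 n)) \<longlonglongrightarrow> w2" using tendsto_fst[OF tendsto_snd[OF lim1]] by (simp add: lw T_def o_def)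
    have lAA: "(\<lambda>n. AA (k1 n)) \<longlonglongrightarrow> a" using tendsto_fst[OF tendsto_snd[OF tendsto_snd[OF lim1]]] by (simp add: lw T_def o_def)
    have lBB: "(\<lambda>n. BB (k1 n)) \<longlonglongrightarrow> b" using tendsto_snd[OF tendsto_snd[OF tendsto_snd[OF lim1]]] by (simp add: lw T_def o_def)
    have nw: "norm w1 = 1" "norm w2 = 1" using l unfolding lw S0_def by auto
    have "(\<lambda>n. inner (W1 (k1 n)) (W2 (k1 n))) \<longlonglongrightarrow> inner w1 w2" by (intro tendsto_inner lW1 lW2)
    moreover have "(\<lambda>n. inner (W1 (k1 n)) (W2 (k1 n))) = (\<lambda>n. 0)" using fr unfolding orthonormal2_def by auto
    ultimately have "inner w1 w2 = 0" using LIMSEQ_unique tendsto_const by metis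
    then have frw: "orthonormal2 w1 w2" using nw unfolding orthonormal2_def by simp
    have "r \<le> b - a" by (rule LIMSEQ_le_const[OF tendsto_diff[OF lBB lAA]]) (use len in auto)
    have bndC: "norm (FF (k1 n) x) \<le> C" if "x \<in> {-K..K}" for n x using bnds that by simp
    have eqc: "\<exists>d>0. \<forall>n y. y \<in> {-K..K} \<and> norm (x - y) < d \<longrightarrow> norm (FF (k1 n) x - FF (k1 n) y) < e"
        if "x \<in> {-K..K}" "0 < e" for x e
    proof (intro exI[of _ "e / M"] conjI allI impI)
      show "e / M > 0" using that M by simp
      fix n y assume y: "y \<in> {-K..K} \<and> norm (x - y) < e / M"
      have "norm (FF (k1 n) x - FF (k1 n) y) \<le> M * norm (x - y)"
        using lipschitz_onD[OF lip[of "k1 n"], of x y] by (simp add: dist_norm)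
      also have "\<dots> < M * (e / M)" using y M by (intro mult_strict_left_mono) auto
      finally show "norm (FF (k1 n) x - FF (k1 n) y) < e" using M by simp
    qed
    obtain g k2 where gc: "continuous_on {-K..K} g" and k2: "strict_mono k2"
      and unif: "\<And>e. 0 < e \<Longrightarrow> \<exists>N. \<forall>(n::nat) x. n \<ge> N \<and> x \<in> {-K..K} \<longrightarrow> norm (FF (k1 (k2 n)) x - g x) < e"
      apply (rule Arzela_Ascoli[of "{-K..K}" "\<lambda>n. FF (k1 n)" C])
        apply (rule compact_Icc)
       apply (erule bndC)
      apply (erule (1) eqc)
      by blast
    define k where "k = k1 \<circ> k2"
    have lW1': "(\<lambda>n. W1 (k n)) \<longlonglongrightarrow> w1" using LIMSEQ_subseq_LIMSEQ[OF lW1 k2] by (simp add: k_def o_def)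
    have lW2': "(\<lambda>n. W2 (k n)) \<longlonglongrightarrow> w2" using LIMSEQ_subseq_LIMSEQ[OF lW2 k2] by (simp add: k_def o_def)
    have km: "strict_mono k" unfolding k_def using k1 k2 by (rule strict_mono_o)
    have leps: "eps \<longlonglongrightarrow> 0"
    proof (rule tendsto_sandwich[of "\<lambda>n. 0" _ _ "\<lambda>n. inverse (real (Suc n))"])
      show "\<forall>\<^sub>F n in sequentially. 0 \<le> eps n" by (intro always_eventually allI) (simp add: less_imp_le[OF eps(1)])
      show "\<forall>\<^sub>F n in sequentially. eps n \<le> inverse (real (Suc n))" by (intro always_eventually allI) (metis eps(2) inverse_eq_divide less_imp_le)
    qed (simp, rule LIMSEQ_inverse_real_of_nat)
    have leps': "(\<lambda>n. eps (k n)) \<longlonglongrightarrow> 0" using LIMSEQ_subseq_LIMSEQ[OF leps km] by (simp add: o_def)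
    have ptw: "(\<lambda>n. FF (k n) x) \<longlonglongrightarrow> g x" if "x \<in> {-K..K}" for x
      unfolding lim_sequentially dist_real_def
    proof (intro allI impI)
      fix e :: real assume "e > 0"
      then obtain N where "\<forall>n x. n \<ge> N \<and> x \<in> {-K..K} \<longrightarrow> norm (FF (k1 (k2 n)) x - g x) < e" using unif by blast
      then show "\<exists>no. \<forall>n\<ge>no. \<bar>FF (k n) x - g x\<bar> < e" using that by (auto simp: k_def)
    qed
    have glip: "\<bar>g x - g y\<bar> \<le> M * \<bar>x - y\<bar>" if "x \<in> {-K..K}" "y \<in> {-K..K}" for x y
    proof (rule LIMSEQ_le_const2)
      show "(\<lambda>n. \<bar>FF (k n) x - FF (k n) y\<bar>) \<longlonglongrightarrow> \<bar>g x - g y\<bar>"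
        by (intro tendsto_intros ptw that)
      show "\<exists>N. \<forall>n\<ge>N. \<bar>FF (k n) x - FF (k n) y\<bar> \<le> M * \<bar>x - y\<bar>"
        using lipschitz_onD[OF lip] by (auto simp: dist_real_def)
    qed
    define cl where "cl x = max (-K) (min K x)" for x
    define G where "G x = g (cl x)" for x
    have clK: "cl x \<in> {-K..K}" for x unfolding cl_def using K0 by auto
    have cld: "\<bar>cl x - cl y\<bar> \<le> \<bar>x - y\<bar>" for x y unfolding cl_def by (auto simp: max_def min_def abs_le_iff)
    have Glip: "M-lipschitz_on UNIV G"
    proof (rule lipschitz_onI)
      fix x y :: real
      have "\<bar>G x - G y\<bar> \<le> M * \<bar>cl x - cl y\<bar>" unfolding G_def by (rule glip[OF clK clK])
      also have "\<dots> \<le> M * \<bar>x - y\<bar>" using cld M by (intro mult_left_mono) auto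
      finally show "dist (G x) (G y) \<le> M * dist x y" by (simp add: dist_real_def)
    qed (use M in auto)
    define S where "S = {x. x *\<^sub>R w1 + G x *\<^sub>R w2 \<in> E}"
    have Snull: "S \<in> null_sets lebesgue" using PU frw Glip unfolding purely_unrectifiable_def S_def by blast
    define U where "U N = (\<Union>n\<in>{N..}. A (k n))" for N
    have Um: "U N \<in> sets lebesgue" for N
      unfolding U_def by (rule sets.countable_UN'') (auto intro: Am countableI_type)
    have AK: "A n \<subseteq> {-K..K}" for n
    proof
      fix x assume "x \<in> A n"
      then show "x \<in> {-K..K}" using Amem[of x n] bnds[of n] by auto
    qed
    have Usub: "U N \<subseteq> {-K..K}" for N unfolding U_def using AK by blast
    have Uf: "U N \<in> fmeasurable lebesgue" for N
      by (rule fmeasurableI2[OF _ Usub Um]) simp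
    have dec: "decseq U" unfolding decseq_def U_def by (auto intro: order_trans)
    have lim: "(\<lambda>N. measure lebesgue (U N)) \<longlonglongrightarrow> measure lebesgue (\<Inter>N. U N)"
    proof (rule Lim_measure_decseq)
      show "range U \<subseteq> sets lebesgue" using Um by auto
      show "decseq U" by (rule dec)
      show "emeasure lebesgue (U i) \<noteq> \<infinity>" for i
        using emeasure_eq_measure2[OF Uf[of i]] by simp
    qed
    have mU: "measure lebesgue (U N) \<ge> \<delta>/2 * r" for N
    proof -
      have "A (k N) \<subseteq> U N" unfolding U_def by auto
      then have "measure lebesgue (A (k N)) \<le> measure lebesgue (U N)"
        by (rule measure_mono_fmeasurable[OF _ Am Uf])
      then show ?thesis using mA2[of "k N"] by linarith
    qed
    have mI: "measure lebesgue (\<Inter>N. U N) \<ge> \<delta>/2 * r"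
      by (rule LIMSEQ_le_const[OF lim]) (use mU in auto)
    have Im: "(\<Inter>N. U N) \<in> sets lebesgue"
      by (rule sets.countable_INT') (auto intro: Um countableI_type)
    have IS: "(\<Inter>N. U N) \<subseteq> S"
    proof
      fix x assume xI: "x \<in> (\<Inter>N. U N)"
      then have "x \<in> U 0" by blast
      then obtain n0 where "x \<in> A (k n0)" by (auto simp: U_def)
      then have xK: "x \<in> {-K..K}" using AK by blast
      have "cl x = x" unfolding cl_def using xK by auto
      then have Gx: "G x = g x" unfolding G_def by simp
      let ?q = "x *\<^sub>R w1 + g x *\<^sub>R w2"
      have "?q \<in> E"
      proof (rule closed_approachable[OF compact_imp_closed[OF cE], THEN iffD1], intro allI impI)
        fix e :: real assume e: "e > 0"
        define e' where "e' = e / (4 * (K + \<bar>g x\<bar> + 1))"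
        have den: "4 * (K + \<bar>g x\<bar> + 1) > 0" using K0 by simp
        have e'0: "e' > 0" using e den unfolding e'_def by simp
        have ee: "e = 4 * (K + \<bar>g x\<bar> + 1) * e'" unfolding e'_def using den by simp
        have ev1: "eventually (\<lambda>n. norm (W1 (k n) - w1) < e') sequentially"
          using tendstoD[OF lW1' e'0] by (simp add: dist_norm)
        have ev2: "eventually (\<lambda>n. norm (W2 (k n) - w2) < e') sequentially"
          using tendstoD[OF lW2' e'0] by (simp add: dist_norm)
        have ev3: "eventually (\<lambda>n. eps (k n) < e') sequentially"
          using tendstoD[OF leps' e'0] by eventually_elim (auto simp: dist_real_def)
        have ev4: "eventually (\<lambda>n. \<bar>FF (k n) x - g x\<bar> < e') sequentially"
        proof -
          obtain N where "\<forall>(n::nat) x. n \<ge> N \<and> x \<in> {-K..K} \<longrightarrow> norm (FF (k1 (k2 n)) x - g x) < e'"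
            using unif[OF e'0] by blast
          then show ?thesis unfolding eventually_sequentially using xK by (auto simp: k_def)
        qed
        have "eventually (\<lambda>n. norm (W1 (k n) - w1) < e' \<and> norm (W2 (k n) - w2) < e' \<and>
              eps (k n) < e' \<and> \<bar>FF (k n) x - g x\<bar> < e') sequentially"
          using ev1 ev2 ev3 ev4 by eventually_elim auto
        then obtain N where N: "\<And>n. n \<ge> N \<Longrightarrow> norm (W1 (k n) - w1) < e' \<and> norm (W2 (k n) - w2) < e' \<and>
              eps (k n) < e' \<and> \<bar>FF (k n) x - g x\<bar> < e'"
          unfolding eventually_sequentially by blast
        from xI have "x \<in> U N" by blast
        then obtain n where n: "n \<ge> N" "x \<in> A (k n)" by (auto simp: U_def)
        from Amem[OF n(2)] obtain y where y: "\<bar>y\<bar> \<le> eps (k n)"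
          "x *\<^sub>R W1 (k n) + (FF (k n) x + y) *\<^sub>R W2 (k n) \<in> E" by blast
        let ?p = "x *\<^sub>R W1 (k n) + (FF (k n) x + y) *\<^sub>R W2 (k n)"
        have eq: "?p - ?q = x *\<^sub>R (W1 (k n) - w1) + (FF (k n) x - g x) *\<^sub>R W2 (k n)
            + y *\<^sub>R W2 (k n) + g x *\<^sub>R (W2 (k n) - w2)" by (simp add: algebra_simps)
        have nW2: "norm (W2 (k n)) = 1" using fr unfolding orthonormal2_def by simp
        note Nn = N[OF n(1)]
        have t1: "\<bar>x\<bar> * norm (W1 (k n) - w1) \<le> K * e'"
          by (rule mult_mono) (use xK Nn in auto)
        have t2: "\<bar>FF (k n) x - g x\<bar> \<le> e'" using Nn by simp
        have t3: "\<bar>y\<bar> \<le> e'" using Nn y(1) by simp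
        have t4: "\<bar>g x\<bar> * norm (W2 (k n) - w2) \<le> \<bar>g x\<bar> * e'"
          by (rule mult_left_mono) (use Nn in auto)
        have "norm (?p - ?q) \<le> norm (x *\<^sub>R (W1 (k n) - w1)) + norm ((FF (k n) x - g x) *\<^sub>R W2 (k n))
            + norm (y *\<^sub>R W2 (k n)) + norm (g x *\<^sub>R (W2 (k n) - w2))" unfolding eq by (rule norm4)
        also have "\<dots> = \<bar>x\<bar> * norm (W1 (k n) - w1) + \<bar>FF (k n) x - g x\<bar> + \<bar>y\<bar> + \<bar>g x\<bar> * norm (W2 (k n) - w2)"
          using nW2 by simp
        also have "\<dots> \<le> K * e' + e' + e' + \<bar>g x\<bar> * e'" using t1 t2 t3 t4 by linarith
        also have "\<dots> = (K + 2 + \<bar>g x\<bar>) * e'" by (simp add: algebra_simps)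
        also have "\<dots> < 4 * (K + \<bar>g x\<bar> + 1) * e'"
          by (rule mult_strict_right_mono) (use K0 e'0 in auto)
        also have "\<dots> = e" using ee by simp
        finally show "\<exists>z\<in>E. dist z ?q < e" using y(2) by (auto simp: dist_norm)
      qed
      then show "x \<in> S" unfolding S_def using Gx by simp
    qed
    have "(\<Inter>N. U N) \<in> null_sets lebesgue" by (rule null_sets_subset[OF Snull Im IS])
    then have "measure lebesgue (\<Inter>N. U N) = 0" by (rule measure_eq_0_null_sets)
    with mI pos show False by linarith
  qed
qed

theorem proposition1p9:
  fixes E :: "(real^2) set"
  assumes "compact E"
  shows "purely_unrectifiable E \<longleftrightarrow>
           (\<forall>r>0. \<forall>M>0. ((\<lambda>\<epsilon>. rect_const E \<epsilon> r M) \<longlongrightarrow> 0) (at_right 0))"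
  using hard_dir[OF assms] easy_dir[OF assms] by blast

end
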